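(* Let $K=[s,t]$ with $0<s<t<\xi$. There are constants $C=C(K)>0$ and $D\ge0$ such that for every $\sigma\in\mathcal A^*$ with $\pi(\sigma)\in K$, $$\|M(\sigma)\|_1\le C|\sigma|^D\eta(\sigma),$$ where $\|\cdot\|_1$ is the operator norm induced by the $\ell^1$ norm.
   Context: Fix integers $d\ge 3$ and $m\ge d$ and a probability vector $\mathbf p=(p_0,\dots,p_m)$ with all $p_i>0$ which is regular, normalized so that $p_0\le p_m\le p_i$ for all $1\le i\le m-1$. Let $\mathcal A=\{0,\dots,m\}$, $\mathcal A^k$ the set of words of length $k$, $\mathcal A^*=\bigcup_{k\ge0}\mathcal A^k$, $|\sigma|$ the length of $\sigma$. Put $\xi=m/(d-1)$. Define $\pi(\sigma)=\sum_{i=1}^{|\sigma|}\sigma_i d^{-i}$. For $\sigma\in\mathcal A^k$ let $\mathbf p(\sigma)=\prod_{j=1}^k p_{\sigma_j}$ and $\eta(\sigma)=\sum\{\mathbf p(\sigma'):\sigma'\in\mathcal A^k,\ \pi(\sigma')=\pi(\sigma)\}$. Let $a=1+\lfloor (m-d)/(d-1)\rfloor$, set $p_j=0$ for $j\notin\mathcal A$, and let $M_i$ ($i\in\mathcal A$) be the $(2a+1)\times(2a+1)$ matrix indexed by $\{-a,\dots,a\}^2$ with $M_i(k,l)=p_{k+i-ld}$; $M(\sigma)=M_{\sigma_k}\cdots M_{\sigma_1}$ for $\sigma\in\mathcal A^k$. *)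

theory Defs
  imports Complex_Main
begin

text \<open>Words over the alphabet {0..m} are lists of naturals; the i-th letter
  sigma_i (1-based) is the list element at position i-1.\<close>

definition words :: "nat \<Rightarrow> nat \<Rightarrow> nat list set" where
  "words m k = {\<sigma>. length \<sigma> = k \<and> set \<sigma> \<subseteq> {0..m}}"

definition proj :: "nat \<Rightarrow> nat list \<Rightarrow> real" where
  "proj d \<sigma> = (\<Sum>i<length \<sigma>. real (\<sigma> ! i) / real d ^ (i + 1))"

definition wprob :: "(nat \<Rightarrow> real) \<Rightarrow> nat list \<Rightarrow> real" where
  "wprob p \<sigma> = (\<Prod>j<length \<sigma>. p (\<sigma> ! j))"

definition eta :: "nat \<Rightarrow> nat \<Rightarrow> (nat \<Rightarrow> real) \<Rightarrow> nat list \<Rightarrow> real" where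
  "eta d m p \<sigma> =
     (\<Sum>\<sigma>' \<in> {\<sigma>' \<in> words m (length \<sigma>). proj d \<sigma>' = proj d \<sigma>}. wprob p \<sigma>')"

definition apar :: "nat \<Rightarrow> nat \<Rightarrow> int" where
  "apar d m = 1 + \<lfloor>(real m - real d) / (real d - 1)\<rfloor>"

definition idx :: "nat \<Rightarrow> nat \<Rightarrow> int set" where
  "idx d m = {- apar d m .. apar d m}"

definition pext :: "nat \<Rightarrow> (nat \<Rightarrow> real) \<Rightarrow> int \<Rightarrow> real" where
  "pext m p j = (if 0 \<le> j \<and> j \<le> int m then p (nat j) else 0)"

definition mat_mult :: "int set \<Rightarrow> (int \<Rightarrow> int \<Rightarrow> real) \<Rightarrow> (int \<Rightarrow> int \<Rightarrow> real) \<Rightarrow> int \<Rightarrow> int \<Rightarrow> real" where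
  "mat_mult I A B = (\<lambda>k l. \<Sum>j\<in>I. A k j * B j l)"

definition mat_id :: "int \<Rightarrow> int \<Rightarrow> real" where
  "mat_id = (\<lambda>k l. if k = l then 1 else 0)"

definition mat_vec :: "int set \<Rightarrow> (int \<Rightarrow> int \<Rightarrow> real) \<Rightarrow> (int \<Rightarrow> real) \<Rightarrow> int \<Rightarrow> real" where
  "mat_vec I A x = (\<lambda>k. \<Sum>l\<in>I. A k l * x l)"

definition l1norm :: "int set \<Rightarrow> (int \<Rightarrow> real) \<Rightarrow> real" where
  "l1norm I x = (\<Sum>k\<in>I. \<bar>x k\<bar>)"

definition opnorm1 :: "int set \<Rightarrow> (int \<Rightarrow> int \<Rightarrow> real) \<Rightarrow> real" where
  "opnorm1 I A = Sup {l1norm I (mat_vec I A x) | x. l1norm I x \<le> 1}"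

definition Mi :: "nat \<Rightarrow> nat \<Rightarrow> (nat \<Rightarrow> real) \<Rightarrow> nat \<Rightarrow> int \<Rightarrow> int \<Rightarrow> real" where
  "Mi d m p i = (\<lambda>k l. pext m p (k + int i - l * int d))"

text \<open>M(sigma) = M_{sigma_k} ... M_{sigma_1}.\<close>

fun Mw :: "nat \<Rightarrow> nat \<Rightarrow> (nat \<Rightarrow> real) \<Rightarrow> nat list \<Rightarrow> int \<Rightarrow> int \<Rightarrow> real" where
  "Mw d m p [] = mat_id"
| "Mw d m p (i # \<sigma>) = mat_mult (idx d m) (Mw d m p \<sigma>) (Mi d m p i)"

end

theory Submission
  imports Defs
begin


fun num :: "nat \<Rightarrow> nat list \<Rightarrow> int" where
  "num d [] = 0"
| "num d (c # \<tau>) = int c * int d ^ length \<tau> + num d \<tau>"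

fun FF :: "nat \<Rightarrow> nat \<Rightarrow> (nat \<Rightarrow> real) \<Rightarrow> nat \<Rightarrow> int \<Rightarrow> real" where
  "FF d m p 0 X = (if X = 0 then 1 else 0)"
| "FF d m p (Suc n) X = (\<Sum>c\<le>m. p c * FF d m p n (X - int c * int d ^ n))"

fun Mx :: "nat \<Rightarrow> nat \<Rightarrow> nat \<Rightarrow> int" where
  "Mx d m 0 = 0"
| "Mx d m (Suc n) = int d * Mx d m n + int m"

lemma FF_nonneg:
  assumes "\<And>i. i \<le> m \<Longrightarrow> p i \<ge> 0"
  shows "FF d m p n X \<ge> 0"
  using assms by (induction n arbitrary: X) (auto intro!: sum_nonneg)

lemma FF_le1:
  assumes "\<And>i. i \<le> m \<Longrightarrow> p i \<ge> 0" "(\<Sum>i\<le>m. p i) = 1"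
  shows "FF d m p n X \<le> 1"
proof (induction n arbitrary: X)
  case 0 then show ?case by simp
next
  case (Suc n)
  have "FF d m p (Suc n) X \<le> (\<Sum>c\<le>m. p c * 1)"
    unfolding FF.simps
    by (rule sum_mono) (use Suc assms in \<open>auto intro: mult_left_le\<close>)
  then show ?case using assms by simp
qed

lemma FF_last:
  assumes "d > 0"
  shows "FF d m p (Suc n) X = (\<Sum>c\<le>m. p c * (if int d dvd X - int c then FF d m p n ((X - int c) div int d) else 0))"
proof (induction n arbitrary: X)
  case 0
  show ?case unfolding FF.simps
    by (rule sum.cong[OF refl]) (use assms in \<open>auto simp: dvd_div_eq_0_iff\<close>)
next
  case (Suc n)
  have "FF d m p (Suc (Suc n)) X = (\<Sum>c\<le>m. p c * FF d m p (Suc n) (X - int c * int d ^ Suc n))"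
    by simp
  also have "\<dots> = (\<Sum>c\<le>m. p c * (\<Sum>e\<le>m. p e * (if int d dvd (X - int c * int d ^ Suc n) - int e
       then FF d m p n ((X - int c * int d ^ Suc n - int e) div int d) else 0)))"
    by (simp only: Suc.IH)
  also have "\<dots> = (\<Sum>c\<le>m. (\<Sum>e\<le>m. p e * (if int d dvd X - int e
       then p c * FF d m p n ((X - int e) div int d - int c * int d ^ n) else 0)))"
  proof (rule sum.cong[OF refl], unfold sum_distrib_left, rule sum.cong[OF refl])
    fix c e
    have dv: "(int d dvd (X - int c * int d ^ Suc n) - int e) = (int d dvd X - int e)"
    proof -
      have eq: "(X - int c * int d ^ Suc n) - int e = (X - int e) + (- (int c * int d ^ n)) * int d"
        by (simp add: algebra_simps)
      show ?thesis unfolding eq by (rule dvd_add_times_triv_right_iff)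
    qed
    have dq: "(X - int c * int d ^ Suc n - int e) div int d = (X - int e) div int d - int c * int d ^ n"
    proof -
      have eq: "X - int c * int d ^ Suc n - int e = (X - int e) + (- (int c * int d ^ n)) * int d"
        by (simp add: algebra_simps)
      show ?thesis unfolding eq using assms by (simp only: div_mult_self1 of_nat_0_less_iff less_irrefl)
    qed
    show "p c * (p e * (if int d dvd X - int c * int d ^ Suc n - int e
       then FF d m p n ((X - int c * int d ^ Suc n - int e) div int d) else 0)) =
       p e * (if int d dvd X - int e then p c * FF d m p n ((X - int e) div int d - int c * int d ^ n) else 0)"
      using dv dq by simp
  qed
  also have "\<dots> = (\<Sum>e\<le>m. (\<Sum>c\<le>m. p e * (if int d dvd X - int e
       then p c * FF d m p n ((X - int e) div int d - int c * int d ^ n) else 0)))"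
    by (rule sum.swap)
  also have "\<dots> = (\<Sum>e\<le>m. p e * (if int d dvd X - int e then FF d m p (Suc n) ((X - int e) div int d) else 0))"
    by (auto simp: sum_distrib_left intro!: sum.cong)
  finally show ?case .
qed

lemma FF_up:
  assumes d2: "d \<ge> 2" and md: "m \<ge> d" and pos: "\<And>i. i \<le> m \<Longrightarrow> p i \<ge> 0"
    and Kc: "\<And>c. c < m \<Longrightarrow> p (Suc c) \<le> K * p c" and p0: "p 0 \<le> p (d - 1)" and K1: "K \<ge> 1"
  shows "N \<ge> 0 \<Longrightarrow> FF d m p n (N + 1) \<le> K * (real n + 1) * FF d m p n N"
proof (induction n arbitrary: N)
  case 0
  then show ?case using K1 by simp
next
  case (Suc n)
  have d0: "d > 0" using d2 by simp
  obtain m' where m': "m = Suc m'" using md d2 by (cases m) auto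
  define T where "T c = p c * (if int d dvd (N + 1) - int c then FF d m p n ((N + 1 - int c) div int d) else 0)" for c
  define S where "S c = p c * (if int d dvd N - int c then FF d m p n ((N - int c) div int d) else 0)" for c
  have Snn: "S c \<ge> 0" if "c \<le> m" for c
    unfolding S_def using pos[OF that] FF_nonneg[of m p, OF pos] by auto
  have FT: "FF d m p (Suc n) (N + 1) = (\<Sum>c\<le>m. T c)"
    unfolding T_def by (rule FF_last[OF d0])
  have FS: "FF d m p (Suc n) N = (\<Sum>c\<le>m. S c)"
    unfolding S_def by (rule FF_last[OF d0])
  have Ssum: "S c \<le> (\<Sum>c\<le>m. S c)" if "c \<le> m" for c
    by (rule member_le_sum) (use that Snn in auto)
  have "(\<Sum>c\<le>m. T c) = T 0 + (\<Sum>c\<le>m'. T (Suc c))"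
    unfolding m' by (rule sum.atMost_Suc_shift)
  also have "(\<Sum>c\<le>m'. T (Suc c)) \<le> (\<Sum>c\<le>m'. K * S c)"
  proof (rule sum_mono)
    fix c assume c: "c \<in> {..m'}"
    have "T (Suc c) = p (Suc c) * (if int d dvd N - int c then FF d m p n ((N - int c) div int d) else 0)"
      unfolding T_def by simp
    also have "\<dots> \<le> (K * p c) * (if int d dvd N - int c then FF d m p n ((N - int c) div int d) else 0)"
      by (rule mult_right_mono) (use Kc[of c] c m' FF_nonneg[of m p, OF pos] in auto)
    finally show "T (Suc c) \<le> K * S c" unfolding S_def by simp
  qed
  also have "(\<Sum>c\<le>m'. K * S c) \<le> K * (\<Sum>c\<le>m. S c)"
    unfolding sum_distrib_left[symmetric]
    by (rule mult_left_mono, rule sum_mono2) (use Snn m' K1 in auto)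
  also have "T 0 \<le> K * (real n + 1) * S (d - 1)"
  proof (cases "int d dvd N + 1")
    case True
    define q where "q = (N + 1) div int d"
    have Nq: "N + 1 = int d * q" using True unfolding q_def by simp
    have q1: "q \<ge> 1"
    proof (rule ccontr)
      assume "\<not> q \<ge> 1"
      then have "int d * q \<le> 0" using mult_nonneg_nonpos[of "int d" q] by simp
      with Nq Suc.prems show False by simp
    qed
    have T0: "T 0 = p 0 * FF d m p n q" unfolding T_def q_def using True by simp
    have dv: "N - int (d - 1) = int d * (q - 1)" using Nq d0 by (simp add: algebra_simps of_nat_diff)
    have S1: "S (d - 1) = p (d - 1) * FF d m p n (q - 1)"
      unfolding S_def dv using d0 by simp
    have IH: "FF d m p n (q - 1 + 1) \<le> K * (real n + 1) * FF d m p n (q - 1)"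
      by (rule Suc.IH) (use q1 in simp)
    have "T 0 \<le> p (d - 1) * FF d m p n q"
      unfolding T0 by (rule mult_right_mono[OF p0 FF_nonneg[of m p, OF pos]])
    also have "\<dots> \<le> p (d - 1) * (K * (real n + 1) * FF d m p n (q - 1))"
      by (rule mult_left_mono) (use IH pos[of "d - 1"] md in auto)
    finally show ?thesis unfolding S1 by (simp add: algebra_simps)
  next
    case False
    then have "T 0 = 0" unfolding T_def by simp
    moreover have "S (d - 1) \<ge> 0" using Snn md by simp
    moreover have "K * (real n + 1) \<ge> 0" using K1 by simp
    ultimately show ?thesis by simp
  qed
  also have "K * (real n + 1) * S (d - 1) \<le> K * (real n + 1) * (\<Sum>c\<le>m. S c)"
    by (rule mult_left_mono) (use Ssum[of "d - 1"] md K1 in auto)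
  finally have "(\<Sum>c\<le>m. T c) \<le> K * (real (Suc n) + 1) * (\<Sum>c\<le>m. S c)"
    by (simp add: algebra_simps)
  then show ?case using FT FS by simp
qed

lemma FF_down:
  assumes d2: "d \<ge> 2" and md: "m \<ge> d" and pos: "\<And>i. i \<le> m \<Longrightarrow> p i \<ge> 0"
    and Kc: "\<And>c. c < m \<Longrightarrow> p c \<le> K * p (Suc c)" and pm: "p m \<le> p (m + 1 - d)" and K1: "K \<ge> 1"
  shows "N \<le> Mx d m n \<Longrightarrow> FF d m p n (N - 1) \<le> K * (real n + 1) * FF d m p n N"
proof (induction n arbitrary: N)
  case 0
  then show ?case using K1 by simp
next
  case (Suc n)
  have d0: "d > 0" using d2 by simp
  obtain m' where m': "m = Suc m'" using md d2 by (cases m) auto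
  define T where "T c = p c * (if int d dvd (N - 1) - int c then FF d m p n ((N - 1 - int c) div int d) else 0)" for c
  define S where "S c = p c * (if int d dvd N - int c then FF d m p n ((N - int c) div int d) else 0)" for c
  have Snn: "S c \<ge> 0" if "c \<le> m" for c
    unfolding S_def using pos[OF that] FF_nonneg[of m p, OF pos] by auto
  have FT: "FF d m p (Suc n) (N - 1) = (\<Sum>c\<le>m. T c)"
    unfolding T_def by (rule FF_last[OF d0])
  have FS: "FF d m p (Suc n) N = (\<Sum>c\<le>m. S c)"
    unfolding S_def by (rule FF_last[OF d0])
  have Ssum: "S c \<le> (\<Sum>c\<le>m. S c)" if "c \<le> m" for c
    by (rule member_le_sum) (use that Snn in auto)
  have "(\<Sum>c\<le>m. T c) = (\<Sum>c\<le>m'. T c) + T m"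
    unfolding m' by (rule sum.atMost_Suc)
  also have "(\<Sum>c\<le>m'. T c) \<le> (\<Sum>c\<le>m'. K * S (Suc c))"
  proof (rule sum_mono)
    fix c assume c: "c \<in> {..m'}"
    have "T c = p c * (if int d dvd N - int (Suc c) then FF d m p n ((N - int (Suc c)) div int d) else 0)"
      unfolding T_def by (simp add: algebra_simps)
    also have "\<dots> \<le> (K * p (Suc c)) * (if int d dvd N - int (Suc c) then FF d m p n ((N - int (Suc c)) div int d) else 0)"
      by (rule mult_right_mono) (use Kc[of c] c m' FF_nonneg[of m p, OF pos] in auto)
    finally show "T c \<le> K * S (Suc c)" unfolding S_def by simp
  qed
  also have "(\<Sum>c\<le>m'. K * S (Suc c)) \<le> K * (\<Sum>c\<le>m. S c)"
  proof -
    have "(\<Sum>c\<le>m. S c) = S 0 + (\<Sum>c\<le>m'. S (Suc c))"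
      unfolding m' by (rule sum.atMost_Suc_shift)
    then have "(\<Sum>c\<le>m'. S (Suc c)) \<le> (\<Sum>c\<le>m. S c)" using Snn[of 0] by simp
    then show ?thesis unfolding sum_distrib_left[symmetric] using K1 by simp
  qed
  also have "T m \<le> K * (real n + 1) * S (m + 1 - d)"
  proof (cases "int d dvd N - 1 - int m")
    case True
    define q where "q = (N - 1 - int m) div int d"
    have Nq: "N - 1 - int m = int d * q" using True unfolding q_def by simp
    have "N \<le> int d * Mx d m n + int m" using Suc.prems by simp
    then have "int d * q < int d * Mx d m n" using Nq by simp
    then have qM: "q + 1 \<le> Mx d m n" using d0 by (simp add: mult_less_cancel_left)
    have T0: "T m = p m * FF d m p n q" unfolding T_def q_def using True by simp
    have dv: "N - int (m + 1 - d) = int d * (q + 1)" using Nq d0 md by (simp add: algebra_simps of_nat_diff)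
    have S1: "S (m + 1 - d) = p (m + 1 - d) * FF d m p n (q + 1)"
      unfolding S_def dv using d0 by simp
    have IH: "FF d m p n (q + 1 - 1) \<le> K * (real n + 1) * FF d m p n (q + 1)"
      by (rule Suc.IH) (use qM in simp)
    have "T m \<le> p (m + 1 - d) * FF d m p n q"
      unfolding T0 by (rule mult_right_mono[OF pm FF_nonneg[of m p, OF pos]])
    also have "\<dots> \<le> p (m + 1 - d) * (K * (real n + 1) * FF d m p n (q + 1))"
      by (rule mult_left_mono) (use IH pos[of "m + 1 - d"] md d2 in auto)
    finally show ?thesis unfolding S1 by (simp add: algebra_simps)
  next
    case False
    then have "T m = 0" unfolding T_def by simp
    moreover have "S (m + 1 - d) \<ge> 0" using Snn d2 by simp
    moreover have "K * (real n + 1) \<ge> 0" using K1 by simp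
    ultimately show ?thesis by simp
  qed
  also have "K * (real n + 1) * S (m + 1 - d) \<le> K * (real n + 1) * (\<Sum>c\<le>m. S c)"
    by (rule mult_left_mono) (use Ssum[of "m + 1 - d"] d2 K1 in auto)
  finally have "(\<Sum>c\<le>m. T c) \<le> K * (real (Suc n) + 1) * (\<Sum>c\<le>m. S c)"
    by (simp add: algebra_simps)
  then show ?case using FT FS by simp
qed

lemma FF_up_iter:
  assumes d2: "d \<ge> 2" and md: "m \<ge> d" and pos: "\<And>i. i \<le> m \<Longrightarrow> p i \<ge> 0"
    and Kc: "\<And>c. c < m \<Longrightarrow> p (Suc c) \<le> K * p c" and p0: "p 0 \<le> p (d - 1)" and K1: "K \<ge> 1"
    and N: "N \<ge> 0"
  shows "FF d m p n (N + int j) \<le> (K * (real n + 1)) ^ j * FF d m p n N"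
proof (induction j)
  case 0 then show ?case by simp
next
  case (Suc j)
  have "FF d m p n (N + int j + 1) \<le> K * (real n + 1) * FF d m p n (N + int j)"
    by (rule FF_up[OF d2 md pos Kc p0 K1]) (use N in auto)
  also have "\<dots> \<le> K * (real n + 1) * ((K * (real n + 1)) ^ j * FF d m p n N)"
    by (rule mult_left_mono[OF Suc]) (use K1 in simp)
  finally show ?case by (simp add: algebra_simps)
qed

lemma FF_down_iter:
  assumes d2: "d \<ge> 2" and md: "m \<ge> d" and pos: "\<And>i. i \<le> m \<Longrightarrow> p i \<ge> 0"
    and Kc: "\<And>c. c < m \<Longrightarrow> p c \<le> K * p (Suc c)" and pm: "p m \<le> p (m + 1 - d)" and K1: "K \<ge> 1"
    and N: "N \<le> Mx d m n"
  shows "FF d m p n (N - int j) \<le> (K * (real n + 1)) ^ j * FF d m p n N"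
proof (induction j)
  case 0 then show ?case by simp
next
  case (Suc j)
  have "FF d m p n (N - int j - 1) \<le> K * (real n + 1) * FF d m p n (N - int j)"
    by (rule FF_down[OF d2 md pos Kc pm K1]) (use N in auto)
  also have "\<dots> \<le> K * (real n + 1) * ((K * (real n + 1)) ^ j * FF d m p n N)"
    by (rule mult_left_mono[OF Suc]) (use K1 in simp)
  finally show ?case by (simp add: algebra_simps)
qed

lemma Mx_real: "(real d - 1) * of_int (Mx d m n) = real m * (real d ^ n - 1)"
  by (induction n) (auto simp: algebra_simps)

lemma FF_shift:
  assumes d2: "d \<ge> 2" and md: "m \<ge> d" and pos: "\<And>i. i \<le> m \<Longrightarrow> p i \<ge> 0"
    and Kc: "\<And>c. c < m \<Longrightarrow> p (Suc c) \<le> K * p c" and p0: "p 0 \<le> p (d - 1)"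
    and Kc': "\<And>c. c < m \<Longrightarrow> p c \<le> K * p (Suc c)" and pm: "p m \<le> p (m + 1 - d)" and K1: "K \<ge> 1"
    and xi: "xi = real m / (real d - 1)"
    and R1: "s0 * real d ^ R \<ge> xi" and R2: "t' * real d ^ R \<le> of_int (Mx d m R)"
    and l: "\<bar>l\<bar> \<le> a"
    and nR: "R \<le> n"
  shows "\<forall>Z. s0 * real d ^ n - xi \<le> of_int Z \<longrightarrow> of_int Z \<le> t' * real d ^ n \<longrightarrow>
      FF d m p n (Z - l * int d ^ n) \<le> (K * (real R + 1)) ^ (nat a * d ^ R) * FF d m p n Z"
  using nR
proof (induction n rule: dec_induct)
  case base
  show ?case
  proof (intro allI impI)
    fix Z assume Z1: "s0 * real d ^ R - xi \<le> of_int Z" and Z2: "of_int Z \<le> t' * real d ^ R"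
    have Z0: "Z \<ge> 0" using Z1 R1 by linarith
    have ZM: "Z \<le> Mx d m R" using Z2 R2 by linarith
    have B1: "K * (real R + 1) \<ge> 1" using K1 mult_mono[of 1 K 1 "real R + 1"] by simp
    show "FF d m p R (Z - l * int d ^ R) \<le> (K * (real R + 1)) ^ (nat a * d ^ R) * FF d m p R Z"
    proof (cases "l \<ge> 0")
      case True
      have eq: "Z - l * int d ^ R = Z - int (nat l * d ^ R)" using True by simp
      have "FF d m p R (Z - l * int d ^ R) \<le> (K * (real R + 1)) ^ (nat l * d ^ R) * FF d m p R Z"
        unfolding eq by (rule FF_down_iter[OF d2 md pos Kc' pm K1 ZM])
      also have "\<dots> \<le> (K * (real R + 1)) ^ (nat a * d ^ R) * FF d m p R Z"
        by (rule mult_right_mono[OF power_increasing FF_nonneg[of m p, OF pos]])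
          (use l B1 True in \<open>auto intro: mult_right_mono\<close>)
      finally show ?thesis .
    next
      case False
      have eq: "Z - l * int d ^ R = Z + int (nat (- l) * d ^ R)" using False by simp
      have "FF d m p R (Z - l * int d ^ R) \<le> (K * (real R + 1)) ^ (nat (- l) * d ^ R) * FF d m p R Z"
        unfolding eq by (rule FF_up_iter[OF d2 md pos Kc p0 K1 Z0])
      also have "\<dots> \<le> (K * (real R + 1)) ^ (nat a * d ^ R) * FF d m p R Z"
        by (rule mult_right_mono[OF power_increasing FF_nonneg[of m p, OF pos]])
          (use l B1 False in \<open>auto intro: mult_right_mono\<close>)
      finally show ?thesis .
    qed
  qed
next
  case (step n)
  have d0: "d > 0" using d2 by simp
  have xid: "xi * real d = xi + real m" using xi d2 by (simp add: field_simps)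
  show ?case
  proof (intro allI impI)
    fix Z assume Z1: "s0 * real d ^ Suc n - xi \<le> of_int Z" and Z2: "of_int Z \<le> t' * real d ^ Suc n"
    let ?C = "(K * (real R + 1)) ^ (nat a * d ^ R)"
    have "FF d m p (Suc n) (Z - l * int d ^ Suc n) =
      (\<Sum>c\<le>m. p c * (if int d dvd (Z - l * int d ^ Suc n) - int c then FF d m p n ((Z - l * int d ^ Suc n - int c) div int d) else 0))"
      by (rule FF_last[OF d0])
    also have "\<dots> \<le> (\<Sum>c\<le>m. ?C * (p c * (if int d dvd Z - int c then FF d m p n ((Z - int c) div int d) else 0)))"
    proof (rule sum_mono)
      fix c assume c: "c \<in> {..m}"
      have eq: "(Z - l * int d ^ Suc n) - int c = (Z - int c) + (- (l * int d ^ n)) * int d"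
        by (simp add: algebra_simps)
      have dv: "(int d dvd (Z - l * int d ^ Suc n) - int c) = (int d dvd Z - int c)"
        unfolding eq by (rule dvd_add_times_triv_right_iff)
      show "p c * (if int d dvd (Z - l * int d ^ Suc n) - int c then FF d m p n ((Z - l * int d ^ Suc n - int c) div int d) else 0)
         \<le> ?C * (p c * (if int d dvd Z - int c then FF d m p n ((Z - int c) div int d) else 0))"
      proof (cases "int d dvd Z - int c")
        case True
        define Z' where "Z' = (Z - int c) div int d"
        have ZZ: "Z - int c = int d * Z'" using True unfolding Z'_def by simp
        have dq: "(Z - l * int d ^ Suc n - int c) div int d = Z' - l * int d ^ n"
          unfolding eq ZZ using d0 by simp
        have ZZr: "real_of_int Z - real c = real d * of_int Z'"
          using arg_cong[OF ZZ, of real_of_int] by simp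
        have cm: "real c \<le> real m" using c by simp
        have "real d * (s0 * real d ^ n - xi) = s0 * real d ^ Suc n - xi - real m"
          using xid by (simp add: algebra_simps)
        also have "\<dots> \<le> real d * of_int Z'" using Z1 ZZr cm by linarith
        finally have Z'1: "s0 * real d ^ n - xi \<le> of_int Z'" using d0 by simp
        have "real d * of_int Z' \<le> real d * (t' * real d ^ n)" using Z2 ZZr by (simp add: algebra_simps)
        then have Z'2: "of_int Z' \<le> t' * real d ^ n" using d0 by simp
        have IH: "FF d m p n (Z' - l * int d ^ n) \<le> ?C * FF d m p n Z'"
          using step.IH Z'1 Z'2 by blast
        have "p c * (if int d dvd (Z - l * int d ^ Suc n) - int c then FF d m p n ((Z - l * int d ^ Suc n - int c) div int d) else 0)
            = p c * FF d m p n (Z' - l * int d ^ n)" using True dv dq by simp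
        also have "\<dots> \<le> p c * (?C * FF d m p n Z')"
          by (rule mult_left_mono[OF IH pos]) (use c in simp)
        also have "\<dots> = ?C * (p c * (if int d dvd Z - int c then FF d m p n ((Z - int c) div int d) else 0))"
          using True unfolding Z'_def by simp
        finally show ?thesis .
      next
        case False
        then show ?thesis using dv by simp
      qed
    qed
    also have "\<dots> = ?C * FF d m p (Suc n) Z"
      unfolding FF_last[OF d0] sum_distrib_left ..
    finally show "FF d m p (Suc n) (Z - l * int d ^ Suc n) \<le> ?C * FF d m p (Suc n) Z" .
  qed
qed



lemma proj_num:
  assumes "d > 0"
  shows "proj d \<tau> * real d ^ length \<tau> = of_int (num d \<tau>)"
proof (induction \<tau>)
  case Nil then show ?case by (simp add: proj_def)
next
  case (Cons c \<tau>)
  have "proj d (c # \<tau>) = real c / real d + (\<Sum>i<length \<tau>. real ((c # \<tau>) ! Suc i) / real d ^ (Suc i + 1))"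
    unfolding proj_def by (simp only: length_Cons sum.lessThan_Suc_shift) simp
  also have "(\<Sum>i<length \<tau>. real ((c # \<tau>) ! Suc i) / real d ^ (Suc i + 1)) = proj d \<tau> / real d"
    unfolding proj_def sum_divide_distrib by (rule sum.cong) (auto simp: field_simps)
  finally have h: "real d * proj d (c # \<tau>) = real c + proj d \<tau>"
    using assms by (simp add: field_simps)
  have "proj d (c # \<tau>) * real d ^ length (c # \<tau>) = (real d * proj d (c # \<tau>)) * real d ^ length \<tau>"
    by (simp add: algebra_simps)
  also have "\<dots> = real c * real d ^ length \<tau> + proj d \<tau> * real d ^ length \<tau>"
    unfolding h by (simp add: algebra_simps)
  finally show ?case using Cons by simp
qed

lemma wprob_Cons: "wprob p (c # \<tau>) = p c * wprob p \<tau>"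
  unfolding wprob_def by (simp only: length_Cons prod.lessThan_Suc_shift) simp

lemma finite_words: "finite (words m n)"
proof -
  have "words m n = {xs. set xs \<subseteq> {0..m} \<and> length xs = n}" unfolding words_def by auto
  then show ?thesis using finite_lists_length_eq[of "{0..m}" n] by simp
qed

lemma words_Suc: "words m (Suc n) = (\<lambda>(c, \<tau>). c # \<tau>) ` ({..m} \<times> words m n)"
proof
  show "words m (Suc n) \<subseteq> (\<lambda>(c, \<tau>). c # \<tau>) ` ({..m} \<times> words m n)"
  proof
    fix xs assume xs: "xs \<in> words m (Suc n)"
    then have len: "length xs = Suc n" and st: "set xs \<subseteq> {0..m}" unfolding words_def by auto
    obtain c \<tau> where xc: "xs = c # \<tau>" using len by (cases xs) auto
    have "c \<le> m" using st xc by auto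
    moreover have "\<tau> \<in> words m n" using st len xc unfolding words_def by auto
    ultimately show "xs \<in> (\<lambda>(c, \<tau>). c # \<tau>) ` ({..m} \<times> words m n)"
      using xc by (intro image_eqI[where x="(c, \<tau>)"]) auto
  qed
  show "(\<lambda>(c, \<tau>). c # \<tau>) ` ({..m} \<times> words m n) \<subseteq> words m (Suc n)"
    unfolding words_def by auto
qed

lemma set_sum_FF: "(\<Sum>\<tau>\<in>{\<tau>\<in>words m n. num d \<tau> = X}. wprob p \<tau>) = FF d m p n X"
proof (induction n arbitrary: X)
  case 0
  have w0: "{\<tau>\<in>words m 0. num d \<tau> = X} = (if X = 0 then {[]} else {})" unfolding words_def by auto
  show ?case unfolding w0 by (simp add: wprob_def)

next
  case (Suc n)
  have eqset: "{\<tau>\<in>words m (Suc n). num d \<tau> = X} =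
     (\<lambda>(c, \<tau>). c # \<tau>) ` (SIGMA c:{..m}. {\<tau>\<in>words m n. num d \<tau> = X - int c * int d ^ n})"
  proof
    show "{\<tau>\<in>words m (Suc n). num d \<tau> = X} \<subseteq> (\<lambda>(c, \<tau>). c # \<tau>) ` (SIGMA c:{..m}. {\<tau>\<in>words m n. num d \<tau> = X - int c * int d ^ n})"
    proof
      fix xs assume "xs \<in> {\<tau>\<in>words m (Suc n). num d \<tau> = X}"
      then have xw: "xs \<in> words m (Suc n)" and xn: "num d xs = X" by auto
      from xw obtain c \<tau> where xc: "xs = c # \<tau>" and c: "c \<le> m" and tw: "\<tau> \<in> words m n"
        unfolding words_Suc by auto
      have "length \<tau> = n" using tw unfolding words_def by simp
      then have "num d \<tau> = X - int c * int d ^ n" using xn xc by simp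
      then show "xs \<in> (\<lambda>(c, \<tau>). c # \<tau>) ` (SIGMA c:{..m}. {\<tau>\<in>words m n. num d \<tau> = X - int c * int d ^ n})"
        using xc c tw by (intro image_eqI[where x="(c, \<tau>)"]) auto
    qed
    show "(\<lambda>(c, \<tau>). c # \<tau>) ` (SIGMA c:{..m}. {\<tau>\<in>words m n. num d \<tau> = X - int c * int d ^ n}) \<subseteq> {\<tau>\<in>words m (Suc n). num d \<tau> = X}"
    proof
      fix xs assume "xs \<in> (\<lambda>(c, \<tau>). c # \<tau>) ` (SIGMA c:{..m}. {\<tau>\<in>words m n. num d \<tau> = X - int c * int d ^ n})"
      then obtain c \<tau> where xc: "xs = c # \<tau>" and c: "c \<le> m" and tw: "\<tau> \<in> words m n" and tn: "num d \<tau> = X - int c * int d ^ n"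
        by auto
      have "length \<tau> = n" using tw unfolding words_def by simp
      then have "num d xs = X" using xc tn by simp
      moreover have "xs \<in> words m (Suc n)" unfolding words_Suc using xc c tw by auto
      ultimately show "xs \<in> {\<tau>\<in>words m (Suc n). num d \<tau> = X}" by simp
    qed
  qed
  have inj: "inj_on (\<lambda>(c, \<tau>). c # \<tau>) (SIGMA c:{..m}. {\<tau>\<in>words m n. num d \<tau> = X - int c * int d ^ n})"
    by (auto simp: inj_on_def)
  have "(\<Sum>\<tau>\<in>{\<tau>\<in>words m (Suc n). num d \<tau> = X}. wprob p \<tau>)
      = (\<Sum>(c, \<tau>)\<in>(SIGMA c:{..m}. {\<tau>\<in>words m n. num d \<tau> = X - int c * int d ^ n}). wprob p (c # \<tau>))"
    unfolding eqset by (subst sum.reindex[OF inj]) (simp add: case_prod_beta)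
  also have "\<dots> = (\<Sum>c\<le>m. \<Sum>\<tau>\<in>{\<tau>\<in>words m n. num d \<tau> = X - int c * int d ^ n}. wprob p (c # \<tau>))"
    by (rule sum.Sigma[symmetric]) (auto simp: finite_words)
  also have "\<dots> = (\<Sum>c\<le>m. p c * FF d m p n (X - int c * int d ^ n))"
    by (simp add: wprob_Cons sum_distrib_left[symmetric] Suc)
  finally show ?case by simp
qed

lemma eta_FF:
  assumes "d > 0" "set \<sigma> \<subseteq> {0..m}"
  shows "eta d m p \<sigma> = FF d m p (length \<sigma>) (num d \<sigma>)"
proof -
  have "{\<sigma>' \<in> words m (length \<sigma>). proj d \<sigma>' = proj d \<sigma>} = {\<tau>\<in>words m (length \<sigma>). num d \<tau> = num d \<sigma>}"
  proof (intro Collect_cong conj_cong refl)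
    fix \<tau> assume "\<tau> \<in> words m (length \<sigma>)"
    then have len: "length \<tau> = length \<sigma>" unfolding words_def by simp
    have "proj d \<tau> = of_int (num d \<tau>) / real d ^ length \<sigma>"
      using proj_num[OF assms(1), of \<tau>] len assms(1) by (simp add: field_simps)
    moreover have "proj d \<sigma> = of_int (num d \<sigma>) / real d ^ length \<sigma>"
      using proj_num[OF assms(1), of \<sigma>] assms(1) by (simp add: field_simps)
    ultimately show "(proj d \<tau> = proj d \<sigma>) = (num d \<tau> = num d \<sigma>)"
      using assms(1) by (simp add: divide_cancel_right)
  qed
  then show ?thesis unfolding eta_def using set_sum_FF by simp
qed

lemma wprob_ge:
  assumes "set x \<subseteq> {0..m}" "\<And>i. i \<le> m \<Longrightarrow> p i \<ge> q" "q \<ge> 0"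
  shows "q ^ length x \<le> wprob p x"
proof -
  have "(\<Prod>j<length x. q) \<le> (\<Prod>j<length x. p (x ! j))"
  proof (rule prod_mono)
    fix j assume "j \<in> {..<length x}"
    then have "x ! j \<in> set x" by simp
    then have "x ! j \<le> m" using assms(1) by auto
    then show "0 \<le> q \<and> q \<le> p (x ! j)" using assms(2,3) by simp
  qed
  then show ?thesis unfolding wprob_def by simp
qed

lemma eta_ge_wprob:
  assumes "set \<sigma> \<subseteq> {0..m}" "\<And>i. i \<le> m \<Longrightarrow> p i \<ge> 0"
  shows "wprob p \<sigma> \<le> eta d m p \<sigma>"
  unfolding eta_def
proof (rule member_le_sum)
  show "\<sigma> \<in> {\<sigma>' \<in> words m (length \<sigma>). proj d \<sigma>' = proj d \<sigma>}" using assms(1) by (simp add: words_def)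
  show "finite {\<sigma>' \<in> words m (length \<sigma>). proj d \<sigma>' = proj d \<sigma>}" using finite_words by simp
  fix x assume "x \<in> {\<sigma>' \<in> words m (length \<sigma>). proj d \<sigma>' = proj d \<sigma>} - {\<sigma>}"
  then have "set x \<subseteq> {0..m}" by (simp add: words_def)
  then show "0 \<le> wprob p x" using order_trans[OF _ wprob_ge[of x m 0 p]] assms(2) by simp
qed

lemma Mw_nonneg:
  assumes "\<And>i. i \<le> m \<Longrightarrow> p i \<ge> 0"
  shows "Mw d m p \<sigma> k l \<ge> 0"
proof (induction \<sigma> arbitrary: k l)
  case Nil then show ?case by (simp add: mat_id_def)
next
  case (Cons i \<sigma>)
  have "pext m p j \<ge> 0" for j using assms unfolding pext_def by auto
  then show ?case using Cons unfolding Mw.simps mat_mult_def Mi_def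
    by (auto intro!: sum_nonneg mult_nonneg_nonneg)
qed

lemma Mw_le:
  assumes pos: "\<And>i. i \<le> m \<Longrightarrow> p i \<ge> 0"
  shows "Mw d m p \<sigma> k l \<le> FF d m p (length \<sigma>) (num d \<sigma> + k - l * int d ^ length \<sigma>)"
proof (induction \<sigma> arbitrary: k l)
  case Nil then show ?case by (simp add: mat_id_def)
next
  case (Cons i \<sigma>)
  define n where "n = length \<sigma>"
  define e where "e = int i - l * int d"
  define h where "h j = pext m p (j + e) * FF d m p n (num d \<sigma> + k - j * int d ^ n)" for j
  define T where "T = (\<lambda>c. int c - e) ` {..m}"
  have pn: "pext m p j \<ge> 0" for j using pos unfolding pext_def by auto
  have hn: "h j \<ge> 0" for j unfolding h_def using pn FF_nonneg[of m p, OF pos] by simp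
  have "Mw d m p (i # \<sigma>) k l = (\<Sum>j\<in>idx d m. Mw d m p \<sigma> k j * pext m p (j + e))"
    unfolding Mw.simps mat_mult_def Mi_def e_def by (simp add: algebra_simps)
  also have "\<dots> \<le> (\<Sum>j\<in>idx d m. h j)"
    unfolding h_def n_def
    by (rule sum_mono) (use Cons.IH pn in \<open>auto simp: mult.commute intro: mult_left_mono\<close>)
  also have "(\<Sum>j\<in>idx d m. h j) = (\<Sum>j\<in>idx d m \<inter> T. h j)"
  proof (rule sum.mono_neutral_right)
    show "finite (idx d m)" unfolding idx_def by simp
    show "idx d m \<inter> T \<subseteq> idx d m" by blast
    show "\<forall>j\<in>idx d m - idx d m \<inter> T. h j = 0"
    proof
      fix j assume "j \<in> idx d m - idx d m \<inter> T"
      then have jT: "j \<notin> T" by blast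
      have "\<not> (0 \<le> j + e \<and> j + e \<le> int m)"
      proof
        assume a: "0 \<le> j + e \<and> j + e \<le> int m"
        then have "j = int (nat (j + e)) - e" "nat (j + e) \<in> {..m}" by auto
        then have "j \<in> T" unfolding T_def by blast
        with jT show False by blast
      qed
      then show "h j = 0" unfolding h_def pext_def by auto
    qed
  qed
  also have "\<dots> \<le> (\<Sum>j\<in>T. h j)"
    by (rule sum_mono2) (use hn in \<open>auto simp: T_def\<close>)
  also have "(\<Sum>j\<in>T. h j) = (\<Sum>c\<le>m. h (int c - e))"
    unfolding T_def by (rule sum.reindex_cong[where l="\<lambda>c. int c - e"]) (auto simp: inj_on_def)
  also have "\<dots> = (\<Sum>c\<le>m. p c * FF d m p n ((num d (i # \<sigma>) + k - l * int d ^ length (i # \<sigma>)) - int c * int d ^ n))"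
  proof (rule sum.cong[OF refl])
    fix c assume c: "c \<in> {..m}"
    have eq: "num d \<sigma> + k - (int c - e) * int d ^ n = (num d (i # \<sigma>) + k - l * int d ^ length (i # \<sigma>)) - int c * int d ^ n"
      unfolding e_def n_def by (simp add: algebra_simps)
    show "h (int c - e) = p c * FF d m p n ((num d (i # \<sigma>) + k - l * int d ^ length (i # \<sigma>)) - int c * int d ^ n)"
      unfolding h_def eq unfolding pext_def using c by simp
  qed
  also have "\<dots> = FF d m p (length (i # \<sigma>)) (num d (i # \<sigma>) + k - l * int d ^ length (i # \<sigma>))"
    unfolding n_def by simp
  finally show ?case .
qed

lemma opnorm_le:
  assumes fin: "finite I" and E: "\<And>k l. k \<in> I \<Longrightarrow> l \<in> I \<Longrightarrow> \<bar>A k l\<bar> \<le> E" and E0: "E \<ge> 0"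
  shows "opnorm1 I A \<le> real (card I) * E"
  unfolding opnorm1_def
proof (rule cSup_least)
  show "{l1norm I (mat_vec I A x) |x. l1norm I x \<le> 1} \<noteq> {}"
    by (rule ccontr) (auto simp: l1norm_def elim: allE[where x="\<lambda>_. 0"])
  fix y assume "y \<in> {l1norm I (mat_vec I A x) |x. l1norm I x \<le> 1}"
  then obtain x where y: "y = l1norm I (mat_vec I A x)" and x: "l1norm I x \<le> 1" by blast
  have "y = (\<Sum>k\<in>I. \<bar>\<Sum>l\<in>I. A k l * x l\<bar>)" unfolding y l1norm_def mat_vec_def ..
  also have "\<dots> \<le> (\<Sum>k\<in>I. \<Sum>l\<in>I. E * \<bar>x l\<bar>)"
  proof (rule sum_mono)
    fix k assume k: "k \<in> I"
    have "\<bar>\<Sum>l\<in>I. A k l * x l\<bar> \<le> (\<Sum>l\<in>I. \<bar>A k l * x l\<bar>)" by (rule sum_abs)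
    also have "\<dots> \<le> (\<Sum>l\<in>I. E * \<bar>x l\<bar>)"
      by (rule sum_mono) (use E[OF k] in \<open>auto simp: abs_mult intro: mult_right_mono\<close>)
    finally show "\<bar>\<Sum>l\<in>I. A k l * x l\<bar> \<le> (\<Sum>l\<in>I. E * \<bar>x l\<bar>)" .
  qed
  also have "\<dots> = (\<Sum>k\<in>I. E * l1norm I x)" unfolding l1norm_def sum_distrib_left ..
  also have "\<dots> \<le> (\<Sum>k\<in>I. E)" by (rule sum_mono) (use x E0 in \<open>auto intro: mult_left_le\<close>)
  also have "\<dots> = real (card I) * E" by simp
  finally show "y \<le> real (card I) * E" .
qed

lemma Mx_Suc': "Mx d m (Suc n) = int m * int d ^ n + Mx d m n"
  by (induction n) (auto simp: algebra_simps)

lemma num_le_Mx: "set \<sigma> \<subseteq> {0..m} \<Longrightarrow> num d \<sigma> \<le> Mx d m (length \<sigma>)"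
proof (induction \<sigma>)
  case Nil then show ?case by simp
next
  case (Cons c \<sigma>)
  then have "c \<le> m" "num d \<sigma> \<le> Mx d m (length \<sigma>)" by auto
  then have "int c * int d ^ length \<sigma> \<le> int m * int d ^ length \<sigma>"
    by (intro mult_right_mono) auto
  moreover have "Mx d m (length (c # \<sigma>)) = int m * int d ^ length \<sigma> + Mx d m (length \<sigma>)"
    by (simp only: length_Cons Mx_Suc')
  ultimately show ?case using \<open>num d \<sigma> \<le> _\<close> by simp
qed

lemma num_nonneg: "num d \<sigma> \<ge> 0"
  by (induction \<sigma>) auto

lemma apar_ge1: "m \<ge> d \<Longrightarrow> d \<ge> 2 \<Longrightarrow> apar d m \<ge> 1"
  unfolding apar_def by simp

lemma card_idx_pos: "m \<ge> d \<Longrightarrow> d \<ge> 2 \<Longrightarrow> card (idx d m) > 0"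
  using apar_ge1[of d m] unfolding idx_def by simp



theorem corollary11:
  fixes d m :: nat and p :: "nat \<Rightarrow> real" and s t :: real
  assumes "d \<ge> 3" and "m \<ge> d"
    and "\<And>i. i \<le> m \<Longrightarrow> p i > 0"
    and "(\<Sum>i\<le>m. p i) = 1"
    and "p 0 \<le> p m"
    and "\<And>i. 1 \<le> i \<Longrightarrow> i \<le> m - 1 \<Longrightarrow> p m \<le> p i"
    and "0 < s" and "s < t" and "t < real m / (real d - 1)"
  shows "\<exists>C > 0. \<exists>D \<ge> 0. \<forall>\<sigma>. set \<sigma> \<subseteq> {0..m} \<and> proj d \<sigma> \<in> {s..t} \<longrightarrow>
           opnorm1 (idx d m) (Mw d m p \<sigma>) \<le> C * real (length \<sigma>) powr D * eta d m p \<sigma>"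
proof -
  note d3 = assms(1) and md = assms(2) and ppos = assms(3) and psum = assms(4)
    and p0m = assms(5) and pmi = assms(6) and s0 = assms(7) and st = assms(8) and txi = assms(9)
  have d2: "d \<ge> 2" using d3 by simp
  have d0: "d > 0" using d3 by simp
  have pos: "\<And>i. i \<le> m \<Longrightarrow> p i \<ge> 0" using ppos by (simp add: less_imp_le)
  define xi where "xi = real m / (real d - 1)"
  define a where "a = apar d m"
  have a1: "a \<ge> 1" unfolding a_def by (rule apar_ge1[OF md d2])
  have a1r: "real_of_int a \<ge> 1" using a1 by simp
  have xid: "xi * (real d - 1) = real m" unfolding xi_def using d3 by simp
  have xi0: "xi > 0" unfolding xi_def using d3 md by simp
  have txi': "t < xi" using txi unfolding xi_def .
  define K where "K = 1 + (\<Sum>c<m. p (Suc c) / p c + p c / p (Suc c))"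
  have termnn: "\<And>c. c \<in> {..<m} \<Longrightarrow> 0 \<le> p (Suc c) / p c + p c / p (Suc c)"
    using pos by (auto intro!: add_nonneg_nonneg divide_nonneg_nonneg)
  have Kt: "p (Suc c) / p c + p c / p (Suc c) \<le> K - 1" if "c < m" for c
    unfolding K_def using member_le_sum[of c "{..<m}" "\<lambda>c. p (Suc c) / p c + p c / p (Suc c)"] termnn that
    by simp
  have K1: "K \<ge> 1" unfolding K_def using sum_nonneg[of "{..<m}", OF termnn] by simp
  have Kc: "p (Suc c) \<le> K * p c" if "c < m" for c
  proof -
    have pc: "p c > 0" "p (Suc c) > 0" using ppos that by auto
    have "p (Suc c) / p c \<le> K" using Kt[OF that] pc by (smt (verit) divide_pos_pos)
    then show ?thesis using pc by (simp add: divide_le_eq)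
  qed
  have Kc': "p c \<le> K * p (Suc c)" if "c < m" for c
  proof -
    have pc: "p c > 0" "p (Suc c) > 0" using ppos that by auto
    have "p c / p (Suc c) \<le> K" using Kt[OF that] pc by (smt (verit) divide_pos_pos)
    then show ?thesis using pc by (simp add: divide_le_eq)
  qed
  have "p m \<le> p (d - 1)" by (rule pmi) (use d3 md in auto)
  then have p0: "p 0 \<le> p (d - 1)" using p0m by simp
  have pm: "p m \<le> p (m + 1 - d)" by (rule pmi) (use d3 md in auto)
  define R where "R = nat \<lceil>2 * (xi + of_int a) / s + 2 * (xi + of_int a) / (xi - t)\<rceil>"
  have dR: "real R \<le> real d ^ R"
  proof -
    have "R < 2 ^ R" by simp
    also have "(2::nat) ^ R \<le> d ^ R" by (rule power_mono) (use d2 in auto)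
    finally have "R \<le> d ^ R" by simp
    then show ?thesis by (metis of_nat_le_iff of_nat_power)
  qed
  have xa0: "xi + of_int a \<ge> 0" using xi0 a1 by simp
  have Rge: "2 * (xi + of_int a) / s + 2 * (xi + of_int a) / (xi - t) \<le> real R"
    unfolding R_def by linarith
  have Rs: "2 * (xi + of_int a) / s \<le> real R" and Rt: "2 * (xi + of_int a) / (xi - t) \<le> real R"
    using Rge xa0 s0 txi' by (smt (verit) divide_nonneg_pos)+
  have big: "s / 2 * real d ^ n \<ge> xi + of_int a \<and> (xi - t) / 2 * real d ^ n \<ge> xi + of_int a" if "R \<le> n" for n
  proof -
    have "real d ^ R \<le> real d ^ n" by (rule power_increasing[OF that]) (use d2 in simp)
    then have dn: "real R \<le> real d ^ n" using dR by linarith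
    have h1: "2 * (xi + of_int a) \<le> real R * s" using Rs s0 by (simp add: divide_le_eq)
    have h2: "real R * s \<le> real d ^ n * s" by (rule mult_right_mono[OF dn]) (use s0 in simp)
    have h3: "2 * (xi + of_int a) \<le> real R * (xi - t)" using Rt txi' by (simp add: divide_le_eq)
    have h4: "real R * (xi - t) \<le> real d ^ n * (xi - t)" by (rule mult_right_mono[OF dn]) (use txi' in simp)
    have "2 * (xi + of_int a) \<le> s * real d ^ n" using h1 h2 by (simp add: mult.commute)
    moreover have "2 * (xi + of_int a) \<le> (xi - t) * real d ^ n" using h3 h4 by (simp add: mult.commute)
    ultimately show ?thesis by simp
  qed
  define s' where "s' = s / 2"
  define t' where "t' = (t + xi) / 2"
  have R1: "s' * real d ^ R \<ge> xi" using big[of R] a1 unfolding s'_def by simp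
  have MxR: "real_of_int (Mx d m R) = xi * (real d ^ R - 1)"
  proof -
    have "(real d - 1) * real_of_int (Mx d m R) = xi * (real d - 1) * (real d ^ R - 1)"
      unfolding Mx_real xid ..
    then have "(real d - 1) * real_of_int (Mx d m R) = (real d - 1) * (xi * (real d ^ R - 1))"
      by (simp add: algebra_simps)
    moreover have "real d - 1 \<noteq> 0" using d3 by simp
    ultimately show ?thesis by simp
  qed
  have R2: "t' * real d ^ R \<le> of_int (Mx d m R)"
  proof -
    have e: "t' * real d ^ R = xi * real d ^ R - (xi - t) / 2 * real d ^ R" unfolding t'_def by (simp add: field_simps)
    have m': "real_of_int (Mx d m R) = xi * real d ^ R - xi" unfolding MxR by (simp add: algebra_simps)
    have bR: "(xi - t) / 2 * real d ^ R \<ge> xi + of_int a" using big[of R] by simp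
    show ?thesis using e m' bR a1r by linarith
  qed
  define C0 where "C0 = (K * (real R + 1)) ^ (nat a * d ^ R)"
  have C0pos: "C0 > 0" unfolding C0_def using K1 by simp
  have shift: "FF d m p n (Z - l * int d ^ n) \<le> C0 * FF d m p n Z"
    if "\<bar>l\<bar> \<le> a" "R \<le> n" "s' * real d ^ n - xi \<le> of_int Z" "of_int Z \<le> t' * real d ^ n" for l n Z
    using FF_shift[OF d2 md pos Kc p0 Kc' pm K1 xi_def R1 R2 that(1,2)] that(3,4) unfolding C0_def by blast
  define q where "q = Min (p ` {..m})"
  have qle: "q \<le> p i" if "i \<le> m" for i unfolding q_def using that by simp
  have qpos: "q > 0" unfolding q_def using ppos by (subst Min_gr_iff) auto
  have q1: "q \<le> 1"
  proof -
    have "p 0 \<le> (\<Sum>i\<le>m. p i)" by (rule member_le_sum) (use pos in auto)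
    then show ?thesis using qle[of 0] psum by simp
  qed
  define Cf where "Cf = C0 * (2 * K) ^ nat a + 1 / q ^ R"
  have Cfpos: "Cf > 0" unfolding Cf_def using C0pos K1 qpos by (simp add: add_pos_pos)
  define C where "C = real (card (idx d m)) * Cf"
  have Cpos: "C > 0" unfolding C_def using Cfpos card_idx_pos[OF md d2] by simp
  show ?thesis
  proof (rule exI[of _ C], rule conjI[OF Cpos], rule exI[of _ "real (nat a)"], rule conjI[OF of_nat_0_le_iff], intro allI impI)
    fix \<sigma> assume as: "set \<sigma> \<subseteq> {0..m} \<and> proj d \<sigma> \<in> {s..t}"
    then have sig: "set \<sigma> \<subseteq> {0..m}" and prs: "s \<le> proj d \<sigma>" "proj d \<sigma> \<le> t" by auto
    define n where "n = length \<sigma>"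
    define N where "N = num d \<sigma>"
    have n0: "n > 0"
    proof (rule ccontr)
      assume "\<not> n > 0"
      then have "\<sigma> = []" unfolding n_def by simp
      then show False using prs s0 by (simp add: proj_def)
    qed
    have realN: "of_int N = proj d \<sigma> * real d ^ n" using proj_num[OF d0, of \<sigma>] unfolding N_def n_def by simp
    have Nlo: "s * real d ^ n \<le> of_int N" and Nhi: "of_int N \<le> t * real d ^ n"
      using prs realN by (simp_all add: mult_right_mono)
    have N0: "N \<ge> 0" unfolding N_def by (rule num_nonneg)
    have NM: "N \<le> Mx d m n" unfolding N_def n_def by (rule num_le_Mx[OF sig])
    have eta_eq: "eta d m p \<sigma> = FF d m p n N" unfolding n_def N_def by (rule eta_FF[OF d0 sig])
    have eta_nn: "eta d m p \<sigma> \<ge> 0" using eta_eq FF_nonneg[of m p, OF pos] by simp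
    have npow: "real n ^ nat a \<ge> 1" using n0 by simp
    define E where "E = Cf * real n ^ nat a * eta d m p \<sigma>"
    have E0: "E \<ge> 0" unfolding E_def using Cfpos eta_nn by simp
    have entry: "\<bar>Mw d m p \<sigma> k l\<bar> \<le> E" if k: "k \<in> idx d m" and l: "l \<in> idx d m" for k l
    proof -
      have ka: "\<bar>k\<bar> \<le> a" and la: "\<bar>l\<bar> \<le> a" using k l unfolding idx_def a_def by auto
      have Mle: "Mw d m p \<sigma> k l \<le> FF d m p n (N + k - l * int d ^ n)"
        using Mw_le[OF pos, where d=d and \<sigma>=\<sigma> and k=k and l=l] unfolding n_def N_def .
      have Mnn: "Mw d m p \<sigma> k l \<ge> 0" by (rule Mw_nonneg[OF pos])
      show ?thesis
      proof (cases "R \<le> n")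
        case True
        have bg: "s / 2 * real d ^ n \<ge> xi + of_int a" "(xi - t) / 2 * real d ^ n \<ge> xi + of_int a"
          using big[OF True] by auto
        have Z1: "s' * real d ^ n - xi \<le> of_int (N + k)"
          using Nlo bg(1) ka xi0 unfolding s'_def by (simp add: algebra_simps)
        have Z2: "of_int (N + k) \<le> t' * real d ^ n"
          using Nhi bg(2) ka xi0 unfolding t'_def by (simp add: algebra_simps)
        have st1: "FF d m p n (N + k - l * int d ^ n) \<le> C0 * FF d m p n (N + k)"
          by (rule shift[OF la True Z1 Z2])
        have B1: "K * (real n + 1) \<ge> 1" using K1 mult_mono[of 1 K 1 "real n + 1"] by simp
        have st2: "FF d m p n (N + k) \<le> (K * (real n + 1)) ^ nat a * FF d m p n N"
        proof (cases "k \<ge> 0")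
          case True
          have eq: "N + k = N + int (nat k)" using True by simp
          have "FF d m p n (N + k) \<le> (K * (real n + 1)) ^ nat k * FF d m p n N"
            unfolding eq by (rule FF_up_iter[OF d2 md pos Kc p0 K1 N0])
          also have "\<dots> \<le> (K * (real n + 1)) ^ nat a * FF d m p n N"
            by (rule mult_right_mono[OF power_increasing FF_nonneg[of m p, OF pos]]) (use ka B1 in auto)
          finally show ?thesis .
        next
          case False
          have eq: "N + k = N - int (nat (- k))" using False by simp
          have "FF d m p n (N + k) \<le> (K * (real n + 1)) ^ nat (- k) * FF d m p n N"
            unfolding eq by (rule FF_down_iter[OF d2 md pos Kc' pm K1 NM])
          also have "\<dots> \<le> (K * (real n + 1)) ^ nat a * FF d m p n N"
            by (rule mult_right_mono[OF power_increasing FF_nonneg[of m p, OF pos]]) (use ka B1 in auto)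
          finally show ?thesis .
        qed
        have st3: "(K * (real n + 1)) ^ nat a \<le> (2 * K) ^ nat a * real n ^ nat a"
        proof -
          have "K * (real n + 1) \<le> 2 * K * real n" using K1 n0 by (simp add: algebra_simps)
          then have "(K * (real n + 1)) ^ nat a \<le> (2 * K * real n) ^ nat a"
            by (rule power_mono) (use K1 in simp)
          then show ?thesis by (simp add: power_mult_distrib)
        qed
        have "Mw d m p \<sigma> k l \<le> C0 * ((K * (real n + 1)) ^ nat a * FF d m p n N)"
          using Mle st1 mult_left_mono[OF st2, of C0] C0pos by linarith
        also have "\<dots> \<le> C0 * ((2 * K) ^ nat a * real n ^ nat a * FF d m p n N)"
          by (intro mult_left_mono mult_right_mono st3) (use C0pos FF_nonneg[of m p, OF pos] in auto)
        also have "\<dots> \<le> Cf * real n ^ nat a * eta d m p \<sigma>"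
        proof -
          have "0 \<le> 1 / q ^ R * (real n ^ nat a * eta d m p \<sigma>)" using qpos eta_nn by simp
          then show ?thesis unfolding Cf_def eta_eq by (simp add: algebra_simps)
        qed
        finally show ?thesis using Mnn unfolding E_def by simp
      next
        case False
        have "Mw d m p \<sigma> k l \<le> 1" using Mle FF_le1[of m p, OF pos psum] by (meson order_trans)
        have "q ^ R \<le> q ^ n" by (rule power_decreasing) (use False qpos q1 in auto)
        also have "q ^ n \<le> wprob p \<sigma>" unfolding n_def by (rule wprob_ge[OF sig qle]) (use qpos in auto)
        also have "\<dots> \<le> eta d m p \<sigma>" by (rule eta_ge_wprob[OF sig pos])
        finally have qe: "q ^ R \<le> eta d m p \<sigma>" .
        have "1 \<le> 1 / q ^ R * eta d m p \<sigma>" using qe qpos by (simp add: field_simps)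
        also have "\<dots> \<le> 1 / q ^ R * (real n ^ nat a * eta d m p \<sigma>)"
          by (rule mult_left_mono) (use npow eta_nn qpos in \<open>auto intro: mult_le_cancel_right1[THEN iffD2]\<close>)
        also have "\<dots> \<le> Cf * real n ^ nat a * eta d m p \<sigma>"
        proof -
          have "0 \<le> C0 * (2 * K) ^ nat a * (real n ^ nat a * eta d m p \<sigma>)" using C0pos K1 eta_nn by simp
          then show ?thesis unfolding Cf_def by (simp add: algebra_simps)
        qed
        finally show ?thesis using Mnn \<open>Mw d m p \<sigma> k l \<le> 1\<close> unfolding E_def by simp
      qed
    qed
    have "opnorm1 (idx d m) (Mw d m p \<sigma>) \<le> real (card (idx d m)) * E"
      by (rule opnorm_le[OF _ entry E0]) (simp add: idx_def)
    also have "\<dots> = C * real (length \<sigma>) powr real (nat a) * eta d m p \<sigma>"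
      unfolding E_def C_def n_def[symmetric] using n0 by (simp add: powr_realpow)
    finally show "opnorm1 (idx d m) (Mw d m p \<sigma>) \<le> C * real (length \<sigma>) powr real (nat a) * eta d m p \<sigma>" .
  qed
qed

end
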